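(* For every $\varepsilon>0$ there exists $\delta>0$ such that for all sufficiently large $n$ the following holds: if $\mu\in\mathcal P(\Omega^n)$ is $(\delta,2)$-symmetric, then $\mu\otimes\mu$, viewed as a probability measure on $(\Omega\times\Omega)^n\cong\Omega^n\times\Omega^n$, is $(\varepsilon,2)$-symmetric.
   Context: $\Omega$ is a fixed finite nonempty set, $\mathcal P(\mathcal X)$ the set of probability measures on a finite set $\mathcal X$, $\|\cdot\|_{TV}$ total variation. For a finite set $\Omega'$ (here $\Omega$ or $\Omega\times\Omega$), $\nu\in\mathcal P(\Omega'^n)$ and $x,y\in[n]$, let $\nu_{\downarrow x}$ be the law of $\boldsymbol\sigma(x)$ and $\nu_{\downarrow\{x,y\}}$ the joint law of $(\boldsymbol\sigma(x),\boldsymbol\sigma(y))$ for $\boldsymbol\sigma\sim\nu$. The measure $\nu$ is $(\varepsilon,2)$-symmetric if $\frac1{n^2}\sum_{x,y\in[n]}\|\nu_{\downarrow\{x,y\}}-\nu_{\downarrow x}\otimes\nu_{\downarrow y}\|_{TV}<\varepsilon$. The identification of $\Omega^n\times\Omega^n$ with $(\Omega\times\Omega)^n$ maps $(\sigma,\tau)$ to $((\sigma(x),\tau(x)))_{x\in[n]}$. *)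

theory Defs
  imports "HOL-Probability.Probability"
begin

definition tv_dist :: "'b pmf \<Rightarrow> 'b pmf \<Rightarrow> real" where
  "tv_dist p q = (SUP A. \<bar>measure_pmf.prob p A - measure_pmf.prob q A\<bar>)"

text \<open>Configurations in \<Omega>^n are functions nat \<Rightarrow> \<Omega>, extensional on [n] = {..<n}.\<close>
definition marg1 :: "(nat \<Rightarrow> 'b) pmf \<Rightarrow> nat \<Rightarrow> 'b pmf" where
  "marg1 \<nu> x = map_pmf (\<lambda>\<sigma>. \<sigma> x) \<nu>"

definition marg2 :: "(nat \<Rightarrow> 'b) pmf \<Rightarrow> nat \<Rightarrow> nat \<Rightarrow> ('b \<times> 'b) pmf" where
  "marg2 \<nu> x y = map_pmf (\<lambda>\<sigma>. (\<sigma> x, \<sigma> y)) \<nu>"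

definition eps2_symmetric :: "nat \<Rightarrow> real \<Rightarrow> (nat \<Rightarrow> 'b) pmf \<Rightarrow> bool" where
  "eps2_symmetric n \<epsilon> \<nu> \<longleftrightarrow>
     (1 / (real n)^2) * (\<Sum>x<n. \<Sum>y<n. tv_dist (marg2 \<nu> x y) (pair_pmf (marg1 \<nu> x) (marg1 \<nu> y))) < \<epsilon>"

definition tensor_sq :: "nat \<Rightarrow> (nat \<Rightarrow> 'b) pmf \<Rightarrow> (nat \<Rightarrow> 'b \<times> 'b) pmf" where
  "tensor_sq n \<mu> = map_pmf (\<lambda>(\<sigma>, \<tau>). \<lambda>x\<in>{..<n}. (\<sigma> x, \<tau> x)) (pair_pmf \<mu> \<mu>)"

end

theory Submission
  imports Defs
begin

lemma tv_term_bdd: "\<bar>measure_pmf.prob p A - measure_pmf.prob q A\<bar> \<le> 1"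
proof -
  have "measure_pmf.prob p A \<le> 1" "measure_pmf.prob q A \<le> 1"
       "measure_pmf.prob p A \<ge> 0" "measure_pmf.prob q A \<ge> 0" by auto
  then show ?thesis by linarith
qed

lemma tv_bdd: "bdd_above (range (\<lambda>A. \<bar>measure_pmf.prob p A - measure_pmf.prob q A\<bar>))"
  by (rule bdd_aboveI[where M=1]) (auto intro: tv_term_bdd)

lemma tv_upper: "\<bar>measure_pmf.prob p A - measure_pmf.prob q A\<bar> \<le> tv_dist p q"
  unfolding tv_dist_def by (rule cSUP_upper[OF _ tv_bdd]) auto

lemma tv_least: "(\<And>A. \<bar>measure_pmf.prob p A - measure_pmf.prob q A\<bar> \<le> c) \<Longrightarrow> tv_dist p q \<le> c"
  unfolding tv_dist_def by (rule cSUP_least) auto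

lemma tv_nonneg: "tv_dist p q \<ge> 0"
  using tv_upper[of p "{}" q] by simp

lemma tv_map: "tv_dist (map_pmf f p) (map_pmf f q) \<le> tv_dist p q"
  by (rule tv_least) (simp add: tv_upper)

lemma tv_triangle: "tv_dist p r \<le> tv_dist p q + tv_dist q r"
proof (rule tv_least)
  fix A
  have "\<bar>measure_pmf.prob p A - measure_pmf.prob r A\<bar> \<le>
     \<bar>measure_pmf.prob p A - measure_pmf.prob q A\<bar> + \<bar>measure_pmf.prob q A - measure_pmf.prob r A\<bar>"
    by linarith
  also have "\<dots> \<le> tv_dist p q + tv_dist q r" by (intro add_mono tv_upper)
  finally show "\<bar>measure_pmf.prob p A - measure_pmf.prob r A\<bar> \<le> tv_dist p q + tv_dist q r" .
qed

lemma prob_pair_finite: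
  fixes P :: "'b::finite pmf" and R :: "'c::finite pmf"
  shows "measure_pmf.prob (pair_pmf P R) A = (\<Sum>b\<in>UNIV. pmf R b * measure_pmf.prob P {a. (a,b)\<in>A})"
proof -
  have "measure_pmf.prob (pair_pmf P R) A = (\<Sum>z\<in>A. pmf (pair_pmf P R) z)"
    by (rule measure_measure_pmf_finite) simp
  also have "\<dots> = (\<Sum>z\<in>UNIV. if z \<in> A then pmf (pair_pmf P R) z else 0)"
    by (simp add: sum.If_cases)
  also have "\<dots> = (\<Sum>(a,b)\<in>UNIV\<times>UNIV. if (a,b) \<in> A then pmf P a * pmf R b else 0)"
    by (subst UNIV_Times_UNIV) (intro sum.cong refl, auto simp: pmf_pair split_beta)
  also have "\<dots> = (\<Sum>a\<in>UNIV. \<Sum>b\<in>UNIV. if (a,b) \<in> A then pmf P a * pmf R b else 0)"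
    by (simp add: sum.cartesian_product)
  also have "\<dots> = (\<Sum>b\<in>UNIV. \<Sum>a\<in>UNIV. if (a,b) \<in> A then pmf P a * pmf R b else 0)"
    by (rule sum.swap)
  also have "\<dots> = (\<Sum>b\<in>UNIV. pmf R b * measure_pmf.prob P {a. (a,b)\<in>A})"
  proof (rule sum.cong[OF refl])
    fix b
    have "measure_pmf.prob P {a. (a,b)\<in>A} = (\<Sum>a\<in>{a. (a,b)\<in>A}. pmf P a)"
      by (rule measure_measure_pmf_finite) simp
    also have "\<dots> = (\<Sum>a\<in>UNIV. if (a,b)\<in>A then pmf P a else 0)"
      by (simp add: sum.If_cases)
    finally show "(\<Sum>a\<in>UNIV. if (a,b) \<in> A then pmf P a * pmf R b else 0) = pmf R b * measure_pmf.prob P {a. (a,b)\<in>A}"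
      by (simp add: sum_distrib_left) (intro sum.cong refl, simp)
  qed
  finally show ?thesis .
qed

lemma tv_pair_left:
  fixes P Q :: "'b::finite pmf" and R :: "'c::finite pmf"
  shows "tv_dist (pair_pmf P R) (pair_pmf Q R) \<le> tv_dist P Q"
proof (rule tv_least)
  fix A
  have "\<bar>measure_pmf.prob (pair_pmf P R) A - measure_pmf.prob (pair_pmf Q R) A\<bar>
     = \<bar>\<Sum>b\<in>UNIV. pmf R b * (measure_pmf.prob P {a. (a,b)\<in>A} - measure_pmf.prob Q {a. (a,b)\<in>A})\<bar>"
    by (simp add: prob_pair_finite sum_subtractf right_diff_distrib)
  also have "\<dots> \<le> (\<Sum>b\<in>UNIV. \<bar>pmf R b * (measure_pmf.prob P {a. (a,b)\<in>A} - measure_pmf.prob Q {a. (a,b)\<in>A})\<bar>)"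
    by (rule sum_abs)
  also have "\<dots> \<le> (\<Sum>b\<in>UNIV. pmf R b * tv_dist P Q)"
    by (rule sum_mono) (simp add: abs_mult mult_left_mono tv_upper)
  also have "\<dots> = tv_dist P Q"
    by (simp add: sum_distrib_right[symmetric] sum_pmf_eq_1)
  finally show "\<bar>measure_pmf.prob (pair_pmf P R) A - measure_pmf.prob (pair_pmf Q R) A\<bar> \<le> tv_dist P Q" .
qed

lemma tv_pair_right:
  fixes P Q :: "'b::finite pmf" and R :: "'c::finite pmf"
  shows "tv_dist (pair_pmf R P) (pair_pmf R Q) \<le> tv_dist P Q"
proof -
  have "tv_dist (pair_pmf R P) (pair_pmf R Q) =
     tv_dist (map_pmf (\<lambda>(x, y). (y, x)) (pair_pmf P R)) (map_pmf (\<lambda>(x, y). (y, x)) (pair_pmf Q R))"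
    by (simp add: pair_commute_pmf[of R P] pair_commute_pmf[of R Q])
  also have "\<dots> \<le> tv_dist (pair_pmf P R) (pair_pmf Q R)" by (rule tv_map)
  also have "\<dots> \<le> tv_dist P Q" by (rule tv_pair_left)
  finally show ?thesis .
qed

lemma tv_pair_sq:
  fixes P Q :: "'b::finite pmf"
  shows "tv_dist (pair_pmf P P) (pair_pmf Q Q) \<le> 2 * tv_dist P Q"
  using tv_triangle[of "pair_pmf P P" "pair_pmf Q Q" "pair_pmf Q P"]
    tv_pair_left[of P P Q] tv_pair_right[where R=Q and P=P and Q=Q] by linarith

definition gsw :: "('b \<times> 'b) \<times> ('b \<times> 'b) \<Rightarrow> ('b \<times> 'b) \<times> ('b \<times> 'b)" where
  "gsw = (\<lambda>((a,b),(c,d)). ((a,c),(b,d)))"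

lemma gsw_inv[simp]: "gsw (gsw z) = z"
  by (cases z) (auto simp: gsw_def)

lemma gsw_inj: "inj gsw"
  by (metis gsw_inv injI)

lemma pair_sq_swap:
  fixes A B :: "'b pmf"
  shows "pair_pmf (pair_pmf A A) (pair_pmf B B) = map_pmf gsw (pair_pmf (pair_pmf A B) (pair_pmf A B))"
proof (rule pmf_eqI)
  fix z :: "('b \<times> 'b) \<times> ('b \<times> 'b)"
  obtain a b c d where z: "z = ((a,b),(c,d))" by (metis prod.exhaust)
  have "pmf (map_pmf gsw (pair_pmf (pair_pmf A B) (pair_pmf A B))) (gsw (gsw z))
       = pmf (pair_pmf (pair_pmf A B) (pair_pmf A B)) (gsw z)"
    by (rule pmf_map_inj'[OF gsw_inj])
  then show "pmf (pair_pmf (pair_pmf A A) (pair_pmf B B)) z =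
      pmf (map_pmf gsw (pair_pmf (pair_pmf A B) (pair_pmf A B))) z"
    by (simp add: z gsw_def pmf_pair)
qed

lemma pair_map_same: "pair_pmf (map_pmf f M) (map_pmf f M) = map_pmf (\<lambda>(a,b). (f a, f b)) (pair_pmf M M)"
  by (simp add: map_pair)

lemma marg2_tensor:
  assumes "x < n" "y < n"
  shows "marg2 (tensor_sq n \<mu>) x y = map_pmf gsw (pair_pmf (marg2 \<mu> x y) (marg2 \<mu> x y))"
  unfolding marg2_def tensor_sq_def pair_map_same map_pmf_comp
  by (rule map_pmf_cong) (auto simp: assms gsw_def)

lemma marg1_tensor:
  assumes "x < n"
  shows "marg1 (tensor_sq n \<mu>) x = pair_pmf (marg1 \<mu> x) (marg1 \<mu> x)"
  unfolding marg1_def tensor_sq_def pair_map_same map_pmf_comp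
  by (rule map_pmf_cong) (auto simp: assms)

lemma term_bound:
  fixes \<mu> :: "(nat \<Rightarrow> 'a::finite) pmf"
  assumes "x < n" "y < n"
  shows "tv_dist (marg2 (tensor_sq n \<mu>) x y) (pair_pmf (marg1 (tensor_sq n \<mu>) x) (marg1 (tensor_sq n \<mu>) y))
     \<le> 2 * tv_dist (marg2 \<mu> x y) (pair_pmf (marg1 \<mu> x) (marg1 \<mu> y))"
proof -
  let ?P = "marg2 \<mu> x y" and ?Q = "pair_pmf (marg1 \<mu> x) (marg1 \<mu> y)"
  have "tv_dist (marg2 (tensor_sq n \<mu>) x y) (pair_pmf (marg1 (tensor_sq n \<mu>) x) (marg1 (tensor_sq n \<mu>) y))
     = tv_dist (map_pmf gsw (pair_pmf ?P ?P)) (map_pmf gsw (pair_pmf ?Q ?Q))"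
    using assms by (simp add: marg2_tensor marg1_tensor pair_sq_swap)
  also have "\<dots> \<le> tv_dist (pair_pmf ?P ?P) (pair_pmf ?Q ?Q)" by (rule tv_map)
  also have "\<dots> \<le> 2 * tv_dist ?P ?Q" by (rule tv_pair_sq)
  finally show ?thesis .
qed

theorem proposition2p5:
  "\<forall>\<epsilon>>0. \<exists>\<delta>>0. \<exists>n0::nat. \<forall>n\<ge>n0. \<forall>\<mu> :: (nat \<Rightarrow> 'a::finite) pmf.
     set_pmf \<mu> \<subseteq> PiE {..<n} (\<lambda>_. UNIV) \<longrightarrow> eps2_symmetric n \<delta> \<mu> \<longrightarrow>
     eps2_symmetric n \<epsilon> (tensor_sq n \<mu>)"
proof (intro allI impI)
  fix \<epsilon> :: real assume e: "\<epsilon> > 0"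
  show "\<exists>\<delta>>0. \<exists>n0::nat. \<forall>n\<ge>n0. \<forall>\<mu> :: (nat \<Rightarrow> 'a::finite) pmf.
     set_pmf \<mu> \<subseteq> PiE {..<n} (\<lambda>_. UNIV) \<longrightarrow> eps2_symmetric n \<delta> \<mu> \<longrightarrow>
     eps2_symmetric n \<epsilon> (tensor_sq n \<mu>)"
  proof (intro exI[of _ "\<epsilon>/2"] conjI exI[of _ 0] allI impI)
    show "\<epsilon>/2 > 0" using e by simp
    fix n :: nat and \<mu> :: "(nat \<Rightarrow> 'a::finite) pmf"
    assume h: "eps2_symmetric n (\<epsilon>/2) \<mu>"
    let ?S = "\<Sum>x<n. \<Sum>y<n. tv_dist (marg2 \<mu> x y) (pair_pmf (marg1 \<mu> x) (marg1 \<mu> y))"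
    let ?T = "\<Sum>x<n. \<Sum>y<n. tv_dist (marg2 (tensor_sq n \<mu>) x y)
                 (pair_pmf (marg1 (tensor_sq n \<mu>) x) (marg1 (tensor_sq n \<mu>) y))"
    have "?T \<le> (\<Sum>x<n. \<Sum>y<n. 2 * tv_dist (marg2 \<mu> x y) (pair_pmf (marg1 \<mu> x) (marg1 \<mu> y)))"
      by (intro sum_mono term_bound) auto
    also have "\<dots> = 2 * ?S" by (simp add: sum_distrib_left)
    finally have T: "?T \<le> 2 * ?S" .
    have c: "1 / (real n)^2 \<ge> 0" by simp
    have "1 / (real n)^2 * ?T \<le> 1 / (real n)^2 * (2 * ?S)" by (rule mult_left_mono[OF T c])
    also have "\<dots> = 2 * (1 / (real n)^2 * ?S)" by simp
    also have "\<dots> < \<epsilon>" using h unfolding eps2_symmetric_def by (simp add: mult.commute)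
    finally show "eps2_symmetric n \<epsilon> (tensor_sq n \<mu>)" unfolding eps2_symmetric_def .
  qed
qed

end
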